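(* In Streamlet, an honest validator (one following the protocol) never violates a Streamlet slashing condition.
   Context: Streamlet with $n$ validators: time is divided into epochs, each with a leader. The leader of epoch $e$ proposes a block extending one of the longest notarized chains it has seen; an honest validator votes at most once per epoch, and only for the leader's proposal if it extends one of the longest notarized chains the validator has seen. A block is notarized once it has votes from at least $2n/3$ validators. For a block $B$, $e_B$ denotes its epoch and $|B|$ its depth. Streamlet slashing conditions: a validator violates a slashing condition if (1) it votes for two blocks $B_1,B_2$ with $e_{B_1}=e_{B_2}$, or (2) it votes for $B_1,B_2$ with $e_{B_1}<e_{B_2}$ but $|B_1|>|B_2|$. *)

theory Defs
  imports Main
begin

text \<open>A block is identified with its chain back to genesis: the list
  [B_k, ..., B_1] of block contents (epoch, payload), the head being the block
  itself. Genesis is the empty list.\<close>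

type_synonym 'p block = "(nat \<times> 'p) list"

definition epoch :: "'p block \<Rightarrow> nat" where
  "epoch B = (case B of [] \<Rightarrow> 0 | b # _ \<Rightarrow> fst b)"

definition depth :: "'p block \<Rightarrow> nat" where
  "depth B = length B"

definition notarized :: "nat \<Rightarrow> 'v set \<Rightarrow> ('v \<times> 'p block) set \<Rightarrow> 'p block \<Rightarrow> bool" where
  "notarized n V S B \<longleftrightarrow> B = [] \<or> 3 * card {v \<in> V. (v, B) \<in> S} \<ge> 2 * n"

definition notarized_chain :: "nat \<Rightarrow> 'v set \<Rightarrow> ('v \<times> 'p block) set \<Rightarrow> 'p block \<Rightarrow> bool" where
  "notarized_chain n V S C \<longleftrightarrow> (\<forall>k \<le> length C. notarized n V S (drop k C))"

definition longest_notarized_chain :: "nat \<Rightarrow> 'v set \<Rightarrow> ('v \<times> 'p block) set \<Rightarrow> 'p block \<Rightarrow> bool" where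
  "longest_notarized_chain n V S C \<longleftrightarrow>
     notarized_chain n V S C \<and> (\<forall>C'. notarized_chain n V S C' \<longrightarrow> depth C' \<le> depth C)"

definition extends :: "'p block \<Rightarrow> 'p block \<Rightarrow> bool" where
  "extends B C \<longleftrightarrow> (\<exists>b. B = b # C)"

text \<open>Honest validator behaviour.
  seen e: the votes the validator has seen when it votes in epoch e (monotone in e);
  leader e: the leader of epoch e; proposed v e: blocks proposed by v in epoch e;
  votes: the set of pairs (e, B) meaning the validator voted for B in epoch e.\<close>

definition honest_validator ::
  "nat \<Rightarrow> 'v set \<Rightarrow> (nat \<Rightarrow> ('v \<times> 'p block) set) \<Rightarrow> (nat \<Rightarrow> 'v)
     \<Rightarrow> ('v \<Rightarrow> nat \<Rightarrow> 'p block set) \<Rightarrow> (nat \<times> 'p block) set \<Rightarrow> bool" where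
  "honest_validator n V seen leader proposed votes \<longleftrightarrow>
     (\<forall>e e'. e \<le> e' \<longrightarrow> seen e \<subseteq> seen e') \<and>
     (\<forall>e B B'. (e, B) \<in> votes \<longrightarrow> (e, B') \<in> votes \<longrightarrow> B = B') \<and>
     (\<forall>e B. (e, B) \<in> votes \<longrightarrow>
        B \<in> proposed (leader e) e \<and> B \<noteq> [] \<and> epoch B = e \<and>
        (\<exists>C. extends B C \<and> longest_notarized_chain n V (seen e) C))"

definition violates_slashing :: "'p block set \<Rightarrow> bool" where
  "violates_slashing W \<longleftrightarrow>
     (\<exists>B1\<in>W. \<exists>B2\<in>W. B1 \<noteq> B2 \<and> epoch B1 = epoch B2) \<or>
     (\<exists>B1\<in>W. \<exists>B2\<in>W. epoch B1 < epoch B2 \<and> depth B1 > depth B2)"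

end

theory Submission
  imports Defs
begin

lemma notarized_mono:
  assumes "finite V" "S \<subseteq> S'" "notarized n V S B"
  shows "notarized n V S' B"
proof -
  have "card {v \<in> V. (v, B) \<in> S} \<le> card {v \<in> V. (v, B) \<in> S'}"
    using assms(1,2) by (intro card_mono) auto
  then show ?thesis using assms(3) unfolding notarized_def by auto
qed

lemma chain_mono:
  assumes "finite V" "S \<subseteq> S'" "notarized_chain n V S C"
  shows "notarized_chain n V S' C"
  using assms notarized_mono unfolding notarized_chain_def by blast

theorem lemma2:
  fixes n :: nat and V :: "'v set"
    and seen :: "nat \<Rightarrow> ('v \<times> 'p block) set"
    and leader :: "nat \<Rightarrow> 'v" and proposed :: "'v \<Rightarrow> nat \<Rightarrow> 'p block set"
    and votes :: "(nat \<times> 'p block) set"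
  assumes "finite V" and "card V = n"
    and "honest_validator n V seen leader proposed votes"
  shows "\<not> violates_slashing (snd ` votes)"
proof -
  have mono: "\<And>e e'. e \<le> e' \<Longrightarrow> seen e \<subseteq> seen e'"
    and uniq: "\<And>e B B'. (e, B) \<in> votes \<Longrightarrow> (e, B') \<in> votes \<Longrightarrow> B = B'"
    and vt: "\<And>e B. (e, B) \<in> votes \<Longrightarrow> epoch B = e \<and>
        (\<exists>C. extends B C \<and> longest_notarized_chain n V (seen e) C)"
    using assms(3) unfolding honest_validator_def by blast+
  have c1: False if "(e1, B1) \<in> votes" "(e2, B2) \<in> votes" "B1 \<noteq> B2" "epoch B1 = epoch B2"
    for e1 e2 B1 B2
    using that vt uniq by metis
  have c2: False if "(e1, B1) \<in> votes" "(e2, B2) \<in> votes" "epoch B1 < epoch B2"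
      "depth B1 > depth B2" for e1 e2 B1 B2
  proof -
    note h = that
    obtain C1 where C1: "extends B1 C1" "longest_notarized_chain n V (seen e1) C1"
      and E1: "epoch B1 = e1" using vt[OF h(1)] by blast
    obtain C2 where C2: "extends B2 C2" "longest_notarized_chain n V (seen e2) C2"
      and E2: "epoch B2 = e2" using vt[OF h(2)] by blast
    have "notarized_chain n V (seen e2) C1"
      using chain_mono[OF assms(1) mono[of e1 e2]] C1(2) E1 E2 h(3)
      unfolding longest_notarized_chain_def by auto
    then have "depth C1 \<le> depth C2" using C2(2) unfolding longest_notarized_chain_def by blast
    then show False using C1(1) C2(1) h(4) unfolding extends_def depth_def by auto
  qed
  show ?thesis unfolding violates_slashing_def
    using c1 c2 by fastforce
qed

end
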